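(* Let $n\ge d$, $\mathbf X\in\mathbb R^{n\times d}$ with full column rank, $1\le k<d$, and $\mathbf y\in\mathbb R^n$ with $\hat\sigma_{1:k}=\|(\mathbf I-\mathbf P_{-1:k})\mathbf y\|>0$. Let $\hat{\boldsymbol\beta}_{\mathrm{OLS}}=(\mathbf X^T\mathbf X)^{-1}\mathbf X^T\mathbf y$ and $\mathbf u=\mathbf V^T(\mathbf y-\mathbf P_{-1:k}\mathbf y)/\hat\sigma_{1:k}$. Then $$\hat{\boldsymbol\beta}_{1:k,\mathrm{OLS}}=\hat\sigma_{1:k}(\mathbf V_{1:k}^T\mathbf X_{1:k})^{-1}\mathbf u_{1:k}.$$
   Context: $\mathbf A_i$, $\mathbf A_{1:i}$, $\mathbf A_{-1:i}$ denote the $i$-th column, first $i$ columns, and submatrix with first $i$ columns removed (similarly for vector entries). $\mathbf P_{-1:i}$ is the orthogonal projection onto the column space of $\mathbf X_{-1:i}$. $\mathbf V\in\mathbb R^{n\times(n-d+k)}$ has orthonormal columns spanning the orthogonal complement of the column space of $\mathbf X_{-1:k}$, with first $k$ columns $\mathbf V_i=(\mathbf I-\mathbf P_{-1:i})\mathbf X_i/\|(\mathbf I-\mathbf P_{-1:i})\mathbf X_i\|$. *)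

theory Defs
  imports "Jordan_Normal_Form.Matrix" "Jordan_Normal_Form.Gauss_Jordan_Elimination" "Jordan_Normal_Form.DL_Rank"
begin

text \<open>Matrices are JNF matrices with explicit dimensions. Columns are 0-indexed:
 paper column i (1-based) is JNF column i-1.\<close>

definition first_cols :: "nat \<Rightarrow> 'a mat \<Rightarrow> 'a mat" where
  "first_cols i A = mat (dim_row A) i (\<lambda>(r, c). A $$ (r, c))"

definition drop_cols :: "nat \<Rightarrow> 'a mat \<Rightarrow> 'a mat" where
  "drop_cols i A = mat (dim_row A) (dim_col A - i) (\<lambda>(r, c). A $$ (r, c + i))"

definition first_entries :: "nat \<Rightarrow> 'a vec \<Rightarrow> 'a vec" where
  "first_entries i v = vec i (\<lambda>j. v $ j)"

definition col_space :: "'a :: semiring_0 mat \<Rightarrow> 'a vec set" where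
  "col_space A = {A *\<^sub>v x | x. x \<in> carrier_vec (dim_col A)}"

definition proj_mat :: "real mat \<Rightarrow> real mat" where
  "proj_mat A = (THE P. P \<in> carrier_mat (dim_row A) (dim_row A) \<and>
     (\<forall>v \<in> carrier_vec (dim_row A). P *\<^sub>v v \<in> col_space A \<and>
        (\<forall>w \<in> col_space A. (v - P *\<^sub>v v) \<bullet> w = 0)))"

definition vnorm :: "real vec \<Rightarrow> real" where
  "vnorm v = sqrt (v \<bullet> v)"

definition minv :: "real mat \<Rightarrow> real mat" where
  "minv A = the (mat_inverse A)"

end

theory Submission
  imports Defs
begin


lemma full_rank_inj:
  fixes A :: "real mat"
  assumes A: "A \<in> carrier_mat n nc" and r: "vec_space.rank n A = nc"
    and x: "x \<in> carrier_vec nc" and Ax: "A *\<^sub>v x = 0\<^sub>v n"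
  shows "x = 0\<^sub>v nc"
proof -
  interpret vec_space "TYPE(real)" n .
  have dist: "distinct (cols A)"
  proof (rule ccontr)
    assume nd: "\<not> distinct (cols A)"
    obtain S where S: "maximal S (\<lambda>T. T \<subseteq> set (cols A) \<and> lin_indpt T)"
      using maximal_exists[of "(\<lambda>T. T \<subseteq> set (cols A) \<and> lin_indpt T)" "card (set (cols A))" "{}"]
      by (meson List.finite_set card_mono empty_iff empty_subsetI finite_lin_indpt2 rev_finite_subset)
    then have "card S \<le> card (set (cols A))" by (simp add: card_mono maximal_def)
    also have "\<dots> < nc" using A nd
      by (metis card_distinct cols_length card_length carrier_matD(2) nat_less_le)
    finally have "card S < nc" .
    then show False using rank_card_indpt[OF A S] r by simp
  qed
  have li: "lin_indpt (set (cols A))" using full_rank_lin_indpt[OF A _ dist] r by simp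
  have lc: "lincomb (\<lambda>a. x $ find_first a (cols A)) (set (cols A)) = 0\<^sub>v n"
    using lincomb_eq_mat_mult[OF A x dist] Ax by simp
  have "(\<lambda>a. x $ find_first a (cols A)) \<in> set (cols A) \<rightarrow> {0}"
    by (rule not_lindepD[OF li _ _ _ lc]) auto
  then have z: "\<And>i. i < nc \<Longrightarrow> x $ find_first (col A i) (cols A) = 0"
    using A by (auto simp: Pi_def cols_def)
  have "\<And>i. i < nc \<Longrightarrow> find_first (col A i) (cols A) = i"
    using A dist find_first_unique by fastforce
  then show ?thesis using z x by (intro eq_vecI) auto
qed



lemma minv_ok:
  fixes A :: "real mat"
  assumes A: "A \<in> carrier_mat n n"
    and inj: "\<And>x. x \<in> carrier_vec n \<Longrightarrow> A *\<^sub>v x = 0\<^sub>v n \<Longrightarrow> x = 0\<^sub>v n"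
  shows "minv A \<in> carrier_mat n n \<and> minv A * A = 1\<^sub>m n \<and> A * minv A = 1\<^sub>m n"
proof -
  have "det A \<noteq> 0" using det_0_iff_vec_prod_zero_field[OF A] inj by auto
  then have U: "A \<in> Units (ring_mat TYPE(real) n ())" by (rule det_non_zero_imp_unit[OF A])
  then obtain B where "mat_inverse A = Some B" using U mat_inverse(1)[OF A, where b="()"] by (cases "mat_inverse A") auto
  then show ?thesis using mat_inverse(2)[OF A] unfolding minv_def by auto
qed

lemma self_dot_zero:
  fixes w :: "real vec"
  assumes "w \<in> carrier_vec n" "w \<bullet> w = 0" shows "w = 0\<^sub>v n"
proof -
  have "(\<Sum>i\<in>{0..<n}. w $ i * w $ i) = 0" using assms by (simp add: scalar_prod_def)
  then have "\<forall>i\<in>{0..<n}. w $ i * w $ i = 0"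
    by (subst (asm) sum_nonneg_eq_0_iff) auto
  then show ?thesis using assms by (intro eq_vecI) auto
qed

definition lc :: "nat \<Rightarrow> real vec list \<Rightarrow> (nat \<Rightarrow> real) \<Rightarrow> real vec" where
  "lc n ws c = vec n (\<lambda>r. \<Sum>j<length ws. c j * ws!j $ r)"

lemma lc_dim[simp]: "dim_vec (lc n ws c) = n" by (simp add: lc_def)

lemma lc_carrier[simp]: "lc n ws c \<in> carrier_vec n" by (simp add: lc_def)

lemma lc_dot:
  assumes "set ws \<subseteq> carrier_vec n" "u \<in> carrier_vec n"
  shows "lc n ws c \<bullet> u = (\<Sum>j<length ws. c j * (ws!j \<bullet> u))"
proof -
  have "lc n ws c \<bullet> u = (\<Sum>r<n. \<Sum>j<length ws. c j * ws!j $ r * u $ r)"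
    using assms by (simp add: lc_def scalar_prod_def sum_distrib_right lessThan_atLeast0)
  also have "\<dots> = (\<Sum>j<length ws. \<Sum>r<n. c j * ws!j $ r * u $ r)" by (rule sum.swap)
  also have "\<dots> = (\<Sum>j<length ws. c j * (ws!j \<bullet> u))"
    using assms by (auto simp: scalar_prod_def sum_distrib_left lessThan_atLeast0 mult.assoc
       intro!: sum.cong dest!: nth_mem)
  finally show ?thesis .
qed

lemma lc_orth:
  assumes "set ws \<subseteq> carrier_vec n" "u \<in> carrier_vec n" "\<forall>w\<in>set ws. u \<bullet> w = 0"
  shows "lc n ws c \<bullet> u = 0" "u \<bullet> lc n ws c = 0"
proof -
  have "\<And>j. j < length ws \<Longrightarrow> ws!j \<bullet> u = 0" using assms
    by (metis comm_scalar_prod nth_mem subsetD)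
  then show "lc n ws c \<bullet> u = 0" by (simp add: lc_dot[OF assms(1,2)])
  then show "u \<bullet> lc n ws c = 0" using assms comm_scalar_prod[of u n "lc n ws c"] by simp
qed

lemma outer_mult:
  fixes w v :: "real vec"
  assumes "w \<in> carrier_vec n" "v \<in> carrier_vec n"
  shows "mat n n (\<lambda>(i,j). w $ i * w $ j / (w \<bullet> w)) *\<^sub>v v = ((w \<bullet> v) / (w \<bullet> w)) \<cdot>\<^sub>v w"
  using assms
  by (intro eq_vecI) (auto simp: scalar_prod_def row_def sum_distrib_left
      sum_divide_distrib mult_ac intro!: sum.cong)

lemma proj_ex:
  "set ws \<subseteq> carrier_vec n \<Longrightarrow> \<exists>P \<in> carrier_mat n n. \<forall>v\<in>carrier_vec n.
     (\<exists>c. P *\<^sub>v v = lc n ws c) \<and> (\<forall>w\<in>set ws. (v - P *\<^sub>v v) \<bullet> w = 0)"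
proof (induction ws)
  case Nil
  show ?case
    by (rule bexI[of _ "0\<^sub>m n n"]) (auto simp: lc_def intro!: eq_vecI)
next
  case (Cons a ws)
  then have a: "a \<in> carrier_vec n" and ws: "set ws \<subseteq> carrier_vec n" by auto
  from Cons.IH[OF ws] obtain P where P: "P \<in> carrier_mat n n" and
    PP: "\<And>v. v\<in>carrier_vec n \<Longrightarrow> (\<exists>c. P *\<^sub>v v = lc n ws c) \<and> (\<forall>w\<in>set ws. (v - P *\<^sub>v v) \<bullet> w = 0)"
    by blast
  obtain e where e: "P *\<^sub>v a = lc n ws e" using PP[OF a] by blast
  define w where "w = a - P *\<^sub>v a"
  have Pv: "\<And>v. v \<in> carrier_vec n \<Longrightarrow> P *\<^sub>v v \<in> carrier_vec n" using P by simp
  have w: "w \<in> carrier_vec n" using a P by (simp add: w_def)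
  have worth: "\<forall>u\<in>set ws. w \<bullet> u = 0" using PP[OF a] by (simp add: w_def)
  have rorth: "\<And>v. v \<in> carrier_vec n \<Longrightarrow> (v - P *\<^sub>v v) \<bullet> (P *\<^sub>v a) = 0"
    using PP e lc_orth(2)[OF ws] Pv by (metis minus_carrier_vec)
  have wPv: "\<And>v. v \<in> carrier_vec n \<Longrightarrow> w \<bullet> (P *\<^sub>v v) = 0"
    using PP lc_orth(2)[OF ws w worth] by metis
  have lcCons: "\<And>f. lc n (a # ws) f = f 0 \<cdot>\<^sub>v a + lc n ws (\<lambda>j. f (Suc j))"
    using a by (intro eq_vecI) (auto simp: lc_def sum.lessThan_Suc_shift simp del: sum.lessThan_Suc)
  show ?case
  proof (cases "w = 0\<^sub>v n")
    case True
    have "\<And>i. i < n \<Longrightarrow> (a - P *\<^sub>v a) $ i = 0" using True unfolding w_def by simp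
    then have aP: "a = P *\<^sub>v a" using a P by (intro eq_vecI) auto
    show ?thesis
    proof (rule bexI[OF _ P], rule ballI, rule conjI)
      fix v :: "real vec" assume v: "v \<in> carrier_vec n"
      obtain c where c: "P *\<^sub>v v = lc n ws c" using PP[OF v] by blast
      show "\<exists>c. P *\<^sub>v v = lc n (a # ws) c"
      proof (rule exI[of _ "case_nat 0 c"])
        have "lc n (a # ws) (case_nat 0 c) = 0 \<cdot>\<^sub>v a + lc n ws c" by (simp add: lcCons)
        also have "\<dots> = lc n ws c" using a by (intro eq_vecI) auto
        finally show "P *\<^sub>v v = lc n (a # ws) (case_nat 0 c)" using c by simp
      qed
      show "\<forall>u\<in>set (a # ws). (v - P *\<^sub>v v) \<bullet> u = 0"
        using PP[OF v] rorth[OF v] aP by auto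
    qed
  next
    case False
    define Q where "Q = mat n n (\<lambda>(i,j). w $ i * w $ j / (w \<bullet> w))"
    have ww: "w \<bullet> w \<noteq> 0" using self_dot_zero[OF w] False by auto
    have Q: "Q \<in> carrier_mat n n" by (simp add: Q_def)
    have Qv: "\<And>v. v \<in> carrier_vec n \<Longrightarrow> (P + Q) *\<^sub>v v = P *\<^sub>v v + ((w \<bullet> v) / (w \<bullet> w)) \<cdot>\<^sub>v w"
      using outer_mult[OF w] P Q unfolding Q_def by (simp add: add_mult_distrib_mat_vec)
    show ?thesis
    proof (rule bexI[of _ "P + Q"], rule ballI, rule conjI)
      show "P + Q \<in> carrier_mat n n" using P Q by simp
      fix v :: "real vec" assume v: "v \<in> carrier_vec n"
      define t where "t = (w \<bullet> v) / (w \<bullet> w)"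
      obtain c where c: "P *\<^sub>v v = lc n ws c" using PP[OF v] by blast
      show "\<exists>c. (P + Q) *\<^sub>v v = lc n (a # ws) c"
      proof (rule exI[of _ "case_nat t (\<lambda>j. c j - t * e j)"])
        show "(P + Q) *\<^sub>v v = lc n (a # ws) (case_nat t (\<lambda>j. c j - t * e j))"
        proof -
          have PQv: "(P + Q) *\<^sub>v v = lc n ws c + t \<cdot>\<^sub>v (a - lc n ws e)"
            using Qv[OF v] c e by (simp add: t_def w_def)
          show ?thesis unfolding PQv lcCons using a
          by (intro eq_vecI) (auto simp: lc_def right_diff_distrib left_diff_distrib sum_subtractf sum_distrib_left mult.assoc)
        qed
      qed
      have r: "v - (P + Q) *\<^sub>v v = (v - P *\<^sub>v v) - t \<cdot>\<^sub>v w"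
        unfolding Qv[OF v] t_def[symmetric] using v w Pv[OF v] P
        by (intro eq_vecI) auto
      show "\<forall>u\<in>set (a # ws). (v - (P + Q) *\<^sub>v v) \<bullet> u = 0"
      proof
        fix u assume "u \<in> set (a # ws)"
        then consider "u = a" | "u \<in> set ws" by auto
        then show "(v - (P + Q) *\<^sub>v v) \<bullet> u = 0"
        proof cases
          case 2
          then have u: "u \<in> carrier_vec n" using ws by auto
          show ?thesis unfolding r
            using minus_scalar_prod_distrib[OF minus_carrier_vec[OF v Pv[OF v]] smult_carrier_vec[THEN iffD2, OF w] u, of t]
              PP[OF v] 2 worth w u by simp
        next
          case 1
          have aw: "a = w + P *\<^sub>v a" using a Pv[OF a] P unfolding w_def
            by (intro eq_vecI) auto
          have rv: "v - P *\<^sub>v v \<in> carrier_vec n" using v Pv by simp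
          have e1: "(v - P *\<^sub>v v) \<bullet> a = (v - P *\<^sub>v v) \<bullet> w"
            using scalar_prod_add_distrib[OF rv w Pv[OF a]] rorth[OF v] aw by simp
          have e2: "(v - P *\<^sub>v v) \<bullet> w = w \<bullet> v"
            using minus_scalar_prod_distrib[OF v Pv[OF v] w] comm_scalar_prod[OF w v]
              comm_scalar_prod[OF w Pv[OF v]] wPv[OF v] by simp
          have e3: "w \<bullet> a = w \<bullet> w"
            using scalar_prod_add_distrib[OF w w Pv[OF a]] wPv[OF a] aw by simp
          have "(v - P *\<^sub>v v - t \<cdot>\<^sub>v w) \<bullet> a = (v - P *\<^sub>v v) \<bullet> a - t * (w \<bullet> a)"
            using minus_scalar_prod_distrib[OF rv smult_carrier_vec[THEN iffD2, OF w] a, of t] w a by simp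
          also have "\<dots> = 0" using e1 e2 e3 ww by (simp add: t_def)
          finally show ?thesis unfolding r 1 .
        qed
      qed
    qed
  qed
qed



lemma mat_unit: "(A :: 'a :: semiring_1 mat) \<in> carrier_mat n m \<Longrightarrow> j < m \<Longrightarrow> A *\<^sub>v unit_vec m j = col A j"
  by (intro eq_vecI) auto

lemma mv_lc:
  fixes A :: "real mat"
  assumes "A \<in> carrier_mat n m" "x \<in> carrier_vec m"
  shows "A *\<^sub>v x = lc n (cols A) (\<lambda>j. x $ j)"
  using assms by (intro eq_vecI) (auto simp: lc_def scalar_prod_def lessThan_atLeast0 mult.commute intro!: sum.cong)

definition is_proj :: "real mat \<Rightarrow> real mat \<Rightarrow> bool" where
  "is_proj A P \<longleftrightarrow> P \<in> carrier_mat (dim_row A) (dim_row A) \<and>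
     (\<forall>v \<in> carrier_vec (dim_row A). P *\<^sub>v v \<in> col_space A \<and>
        (\<forall>w \<in> col_space A. (v - P *\<^sub>v v) \<bullet> w = 0))"

lemma col_space_carrier: "A \<in> carrier_mat n m \<Longrightarrow> w \<in> col_space A \<Longrightarrow> w \<in> carrier_vec n"
  unfolding col_space_def by auto

lemma is_proj_unique:
  assumes A: "A \<in> carrier_mat n m" and P: "is_proj A P" and Q: "is_proj A Q"
  shows "P = Q"
proof -
  have Pc: "P \<in> carrier_mat n n" and Qc: "Q \<in> carrier_mat n n" using P Q A by (auto simp: is_proj_def)
  have eq: "P *\<^sub>v v = Q *\<^sub>v v" if v: "v \<in> carrier_vec n" for v
  proof -
    obtain x where x: "x \<in> carrier_vec m" "P *\<^sub>v v = A *\<^sub>v x" using P v A by (auto simp: is_proj_def col_space_def)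
    obtain z where z: "z \<in> carrier_vec m" "Q *\<^sub>v v = A *\<^sub>v z" using Q v A by (auto simp: is_proj_def col_space_def)
    define D where "D = P *\<^sub>v v - Q *\<^sub>v v"
    have "D = A *\<^sub>v (x - z)" unfolding D_def x z using A x z by (simp add: mult_minus_distrib_mat_vec)
    then have Dc: "D \<in> col_space A" using x z A unfolding col_space_def by auto
    have o1: "(v - P *\<^sub>v v) \<bullet> D = 0" using P v Dc A by (auto simp: is_proj_def)
    have o2: "(v - Q *\<^sub>v v) \<bullet> D = 0" using Q v Dc A by (auto simp: is_proj_def)
    have Dv: "D \<in> carrier_vec n" using Pc Qc v by (simp add: D_def)
    have DD: "D = (v - Q *\<^sub>v v) - (v - P *\<^sub>v v)" unfolding D_def using v Pc Qc by (intro eq_vecI) auto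
    have "D \<bullet> D = ((v - Q *\<^sub>v v) - (v - P *\<^sub>v v)) \<bullet> D" by (subst DD[symmetric]) (rule refl)
    also have "\<dots> = (v - Q *\<^sub>v v) \<bullet> D - (v - P *\<^sub>v v) \<bullet> D"
      by (rule minus_scalar_prod_distrib) (use v Pc Qc Dv in auto)
    finally have "D \<bullet> D = 0" using o1 o2 by simp
    then have D0: "D = 0\<^sub>v n" using self_dot_zero[OF Dv] by simp
    have "\<And>i. i < n \<Longrightarrow> (P *\<^sub>v v) $ i - (Q *\<^sub>v v) $ i = 0"
    proof -
      fix i assume i: "i < n"
      have "D $ i = 0" using D0 i by simp
      then show "(P *\<^sub>v v) $ i - (Q *\<^sub>v v) $ i = 0" unfolding D_def using i Qc by simp
    qed
    then show ?thesis using Pc Qc by (intro eq_vecI) auto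
  qed
  show ?thesis
  proof (rule eq_matI)
    fix i j assume "i < dim_row Q" "j < dim_col Q"
    then have ij: "i < n" "j < n" using Qc by auto
    have "P $$ (i,j) = (P *\<^sub>v unit_vec n j) $ i" using Pc ij by (simp add: mat_unit)
    also have "\<dots> = (Q *\<^sub>v unit_vec n j) $ i" using eq[of "unit_vec n j"] by simp
    also have "\<dots> = Q $$ (i,j)" using Qc ij by (simp add: mat_unit)
    finally show "P $$ (i,j) = Q $$ (i,j)" .
  qed (use Pc Qc in auto)
qed

lemma is_proj_exists:
  assumes A: "A \<in> carrier_mat n m"
  shows "\<exists>P. is_proj A P"
proof -
  have ws: "set (cols A) \<subseteq> carrier_vec n" using A by (auto simp: cols_def)
  obtain P where P: "P \<in> carrier_mat n n" and
    PP: "\<And>v. v\<in>carrier_vec n \<Longrightarrow> (\<exists>c. P *\<^sub>v v = lc n (cols A) c) \<and> (\<forall>w\<in>set (cols A). (v - P *\<^sub>v v) \<bullet> w = 0)"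
    using proj_ex[OF ws] by blast
  have "is_proj A P" unfolding is_proj_def
  proof (intro conjI ballI)
    show "P \<in> carrier_mat (dim_row A) (dim_row A)" using P A by simp
    fix v :: "real vec" assume "v \<in> carrier_vec (dim_row A)"
    then have v: "v \<in> carrier_vec n" using A by simp
    obtain c where c: "P *\<^sub>v v = lc n (cols A) c" using PP[OF v] by blast
    have "P *\<^sub>v v = A *\<^sub>v vec m c" unfolding c using mv_lc[OF A, of "vec m c"] A
      by (intro eq_vecI) (auto simp: lc_def)
    then show "P *\<^sub>v v \<in> col_space A" unfolding col_space_def using A by auto
    fix w assume "w \<in> col_space A"
    then obtain x where x: "x \<in> carrier_vec m" "w = A *\<^sub>v x" using A unfolding col_space_def by auto
    show "(v - P *\<^sub>v v) \<bullet> w = 0" unfolding x mv_lc[OF A x(1)]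
      by (rule lc_orth(2)[OF ws]) (use PP[OF v] P v in auto)
  qed
  then show ?thesis by blast
qed

lemma proj_mat_spec:
  assumes A: "A \<in> carrier_mat n m"
  shows "proj_mat A \<in> carrier_mat n n"
    "\<And>v. v \<in> carrier_vec n \<Longrightarrow> proj_mat A *\<^sub>v v \<in> col_space A"
    "\<And>v w. v \<in> carrier_vec n \<Longrightarrow> w \<in> col_space A \<Longrightarrow> (v - proj_mat A *\<^sub>v v) \<bullet> w = 0"
proof -
  have "\<exists>!P. is_proj A P" using is_proj_exists[OF A] is_proj_unique[OF A] by blast
  then have "is_proj A (THE P. is_proj A P)" by (rule theI')
  moreover have "proj_mat A = (THE P. is_proj A P)" unfolding proj_mat_def is_proj_def by simp
  ultimately have "is_proj A (proj_mat A)" by simp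
  then show "proj_mat A \<in> carrier_mat n n"
    "\<And>v. v \<in> carrier_vec n \<Longrightarrow> proj_mat A *\<^sub>v v \<in> col_space A"
    "\<And>v w. v \<in> carrier_vec n \<Longrightarrow> w \<in> col_space A \<Longrightarrow> (v - proj_mat A *\<^sub>v v) \<bullet> w = 0"
    using A by (auto simp: is_proj_def)
qed



lemma drop_cols_carrier: "X \<in> carrier_mat n d \<Longrightarrow> drop_cols m X \<in> carrier_mat n (d - m)"
  by (simp add: drop_cols_def)

lemma drop_mult:
  fixes X :: "real mat"
  assumes X: "X \<in> carrier_mat n d" and m: "m \<le> d" and z: "z \<in> carrier_vec (d - m)"
  shows "drop_cols m X *\<^sub>v z = X *\<^sub>v vec d (\<lambda>j. if j < m then 0 else z $ (j - m))"
proof (rule eq_vecI)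
  fix r assume "r < dim_vec (X *\<^sub>v vec d (\<lambda>j. if j < m then 0 else z $ (j - m)))"
  then have r: "r < n" using X by simp
  let ?f = "\<lambda>j. X $$ (r, j) * (if j < m then 0 else z $ (j - m))"
  have "(X *\<^sub>v vec d (\<lambda>j. if j < m then 0 else z $ (j - m))) $ r = (\<Sum>j\<in>{0..<d}. ?f j)"
    using X r by (simp add: scalar_prod_def)
  also have "\<dots> = (\<Sum>j\<in>{0..<m}. ?f j) + (\<Sum>j\<in>{m..<d}. ?f j)"
    by (rule sum.atLeastLessThan_concat[symmetric]) (use m in auto)
  also have "(\<Sum>j\<in>{0..<m}. ?f j) = 0" by simp
  also have "(\<Sum>j\<in>{m..<d}. ?f j) = (\<Sum>j\<in>{0+m..<(d-m)+m}. ?f j)" using m by simp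
  also have "\<dots> = (\<Sum>j\<in>{0..<d-m}. ?f (j + m))" by (rule sum.shift_bounds_nat_ivl)
  also have "\<dots> = (drop_cols m X *\<^sub>v z) $ r"
    using X r z m by (simp add: scalar_prod_def drop_cols_def)
  finally show "(drop_cols m X *\<^sub>v z) $ r = (X *\<^sub>v vec d (\<lambda>j. if j < m then 0 else z $ (j - m))) $ r" by simp
qed (use X in \<open>simp add: drop_cols_def\<close>)

lemma col_in_drop:
  fixes X :: "real mat"
  assumes X: "X \<in> carrier_mat n d" and j: "m \<le> j" "j < d"
  shows "col X j \<in> col_space (drop_cols m X)"
proof -
  have md: "m \<le> d" using j by simp
  have "drop_cols m X *\<^sub>v unit_vec (d - m) (j - m) = X *\<^sub>v vec d (\<lambda>l. if l < m then 0 else unit_vec (d - m) (j - m) $ (l - m))"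
    by (rule drop_mult[OF X md unit_vec_carrier])
  also have "vec d (\<lambda>l. if l < m then 0 else unit_vec (d - m) (j - m) $ (l - m)) = unit_vec d j"
    using j by (intro eq_vecI) (auto simp: unit_vec_def)
  also have "X *\<^sub>v unit_vec d j = col X j" using X j by (simp add: mat_unit)
  finally show ?thesis unfolding col_space_def using X j drop_cols_carrier[OF X, of m]
    by (auto intro!: exI[of _ "unit_vec (d - m) (j - m)"])
qed

lemma minv_det:
  fixes A :: "real mat"
  assumes A: "A \<in> carrier_mat n n" and "det A \<noteq> 0"
  shows "minv A \<in> carrier_mat n n \<and> minv A * A = 1\<^sub>m n \<and> A * minv A = 1\<^sub>m n"
  using minv_ok[OF A] assms det_0_iff_vec_prod_zero_field[OF A] by blast

lemma first_cols_col: "i < k \<Longrightarrow> col (first_cols k A) i = col A i"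
  by (intro eq_vecI) (auto simp: first_cols_def col_def)

lemma first_cols_carrier: "A \<in> carrier_mat n m \<Longrightarrow> first_cols k A \<in> carrier_mat n k"
  by (simp add: first_cols_def)




theorem lemmaC5:
  fixes n d k :: nat and X V :: "real mat" and y :: "real vec"
  assumes "n \<ge> d"
    and X: "X \<in> carrier_mat n d"
    and rank: "vec_space.rank n X = d"
    and "1 \<le> k" and "k < d"
    and y: "y \<in> carrier_vec n"
    and sigma_pos: "vnorm ((1\<^sub>m n - proj_mat (drop_cols k X)) *\<^sub>v y) > 0"
    and V: "V \<in> carrier_mat n (n - d + k)"
    and V_orth: "V\<^sup>T * V = 1\<^sub>m (n - d + k)"
    and V_span: "col_space V =
       {w \<in> carrier_vec n. \<forall>z \<in> col_space (drop_cols k X). w \<bullet> z = 0}"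
    and V_first: "\<forall>i < k. col V i =
       (1 / vnorm ((1\<^sub>m n - proj_mat (drop_cols (i + 1) X)) *\<^sub>v col X i)) \<cdot>\<^sub>v
       ((1\<^sub>m n - proj_mat (drop_cols (i + 1) X)) *\<^sub>v col X i)"
  shows "let \<sigma> = vnorm ((1\<^sub>m n - proj_mat (drop_cols k X)) *\<^sub>v y);
             \<beta> = minv (X\<^sup>T * X) *\<^sub>v (X\<^sup>T *\<^sub>v y);
             u = (1 / \<sigma>) \<cdot>\<^sub>v (V\<^sup>T *\<^sub>v (y - proj_mat (drop_cols k X) *\<^sub>v y))
         in first_entries k \<beta> =
            \<sigma> \<cdot>\<^sub>v (minv ((first_cols k V)\<^sup>T * first_cols k X) *\<^sub>v first_entries k u)"
proof -
  note kd = \<open>k < d\<close>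
  have inj: "\<And>x. x \<in> carrier_vec d \<Longrightarrow> X *\<^sub>v x = 0\<^sub>v n \<Longrightarrow> x = 0\<^sub>v d"
    using full_rank_inj[OF X rank] by blast
  have Xc: "\<And>j. j < d \<Longrightarrow> col X j \<in> carrier_vec n" using X by auto
  have ucol: "\<And>j. j < d \<Longrightarrow> X *\<^sub>v unit_vec d j = col X j" using X by (simp add: mat_unit)
  define G where "G = X\<^sup>T * X"
  have Gc: "G \<in> carrier_mat d d" using X by (simp add: G_def)
  have Gx: "\<And>x. x \<in> carrier_vec d \<Longrightarrow> G *\<^sub>v x = X\<^sup>T *\<^sub>v (X *\<^sub>v x)"
    using X by (simp add: G_def)
  have Ginj: "x = 0\<^sub>v d" if x: "x \<in> carrier_vec d" and G0: "G *\<^sub>v x = 0\<^sub>v d" for x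
  proof -
    have "(X *\<^sub>v x) \<bullet> (X *\<^sub>v x) = (X\<^sup>T *\<^sub>v (X *\<^sub>v x)) \<bullet> x"
      using transpose_vec_mult_scalar[OF X x, of "X *\<^sub>v x"] X x by simp
    also have "\<dots> = 0" using Gx[OF x, symmetric] G0 x by simp
    finally have "X *\<^sub>v x = 0\<^sub>v n" using self_dot_zero[of "X *\<^sub>v x" n] X x by simp
    then show ?thesis using inj x by blast
  qed
  obtain Gi where Gi: "minv G = Gi" "Gi \<in> carrier_mat d d" "Gi * G = 1\<^sub>m d" "G * Gi = 1\<^sub>m d"
    using minv_ok[OF Gc Ginj] by blast
  define \<beta> where "\<beta> = minv G *\<^sub>v (X\<^sup>T *\<^sub>v y)"
  have \<beta>c: "\<beta> \<in> carrier_vec d" using Gi X y by (simp add: \<beta>_def)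
  define r where "r = y - X *\<^sub>v \<beta>"
  have rc: "r \<in> carrier_vec n" using X y \<beta>c by (simp add: r_def)
  have yr: "y = X *\<^sub>v \<beta> + r" using X y \<beta>c unfolding r_def by (intro eq_vecI) auto
  have XTr: "X\<^sup>T *\<^sub>v r = 0\<^sub>v d"
  proof -
    have "X\<^sup>T *\<^sub>v (X *\<^sub>v \<beta>) = G *\<^sub>v \<beta>" using Gx[OF \<beta>c] by simp
    also have "\<dots> = (G * Gi) *\<^sub>v (X\<^sup>T *\<^sub>v y)" unfolding \<beta>_def Gi(1)
      by (rule assoc_mult_mat_vec[symmetric]) (use Gc Gi X y in auto)
    also have "\<dots> = X\<^sup>T *\<^sub>v y" unfolding Gi(4) using X y by simp
    finally have e: "X\<^sup>T *\<^sub>v (X *\<^sub>v \<beta>) = X\<^sup>T *\<^sub>v y" .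
    have "X\<^sup>T *\<^sub>v r = X\<^sup>T *\<^sub>v y - X\<^sup>T *\<^sub>v (X *\<^sub>v \<beta>)" unfolding r_def
      using X y \<beta>c by (simp add: mult_minus_distrib_mat_vec)
    then show ?thesis using e X y by simp
  qed
  have orthX: "r \<bullet> (X *\<^sub>v x) = 0" if x: "x \<in> carrier_vec d" for x
    using transpose_vec_mult_scalar[OF X x rc] XTr x by simp
  define Pm where "Pm i = proj_mat (drop_cols (i + 1) X)" for i
  define wv where "wv i = col X i - Pm i *\<^sub>v col X i" for i
  have Pmc: "\<And>i. Pm i \<in> carrier_mat n n"
    unfolding Pm_def by (rule proj_mat_spec(1)[OF drop_cols_carrier[OF X]])
  have wvc: "wv i \<in> carrier_vec n" if "i < d" for i
    using Pmc[of i] Xc[OF that] unfolding wv_def by simp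
  have wv_alt: "(1\<^sub>m n - Pm i) *\<^sub>v col X i = wv i" if "i < d" for i
    using Pmc[of i] Xc[OF that] unfolding wv_def by (subst minus_mult_distrib_mat_vec[of _ n n]) auto
  have Vcol: "\<And>i. i < k \<Longrightarrow> col V i = (1 / vnorm (wv i)) \<cdot>\<^sub>v wv i"
    using V_first wv_alt kd unfolding Pm_def by simp
  have wv_orth: "\<And>i u. i < d \<Longrightarrow> u \<in> col_space (drop_cols (i + 1) X) \<Longrightarrow> wv i \<bullet> u = 0"
    unfolding wv_def Pm_def using proj_mat_spec(3)[OF drop_cols_carrier[OF X]] Xc by blast
  have Pm_span: "\<exists>z \<in> carrier_vec d. (\<forall>j\<le>i. z $ j = 0) \<and> Pm i *\<^sub>v col X i = X *\<^sub>v z"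
    if i: "i < k" for i
  proof -
    have "Pm i *\<^sub>v col X i \<in> col_space (drop_cols (i + 1) X)"
      unfolding Pm_def using proj_mat_spec(2)[OF drop_cols_carrier[OF X]] Xc i kd by simp
    then obtain z' where z': "z' \<in> carrier_vec (d - (i + 1))" "Pm i *\<^sub>v col X i = drop_cols (i + 1) X *\<^sub>v z'"
      unfolding col_space_def using drop_cols_carrier[OF X, of "i+1"] by auto
    have "Pm i *\<^sub>v col X i = X *\<^sub>v vec d (\<lambda>j. if j < i + 1 then 0 else z' $ (j - (i + 1)))"
      unfolding z'(2) using drop_mult[OF X _ z'(1)] i kd by simp
    then show ?thesis using i kd by (intro bexI[of _ "vec d (\<lambda>j. if j < i + 1 then 0 else z' $ (j - (i + 1)))"]) auto
  qed
  have wv_ne: "wv i \<bullet> wv i \<noteq> 0" and wv_r: "wv i \<bullet> r = 0" and wv_Xi: "wv i \<bullet> col X i = wv i \<bullet> wv i"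
    if i: "i < k" for i
  proof -
    obtain z where z: "z \<in> carrier_vec d" "\<forall>j\<le>i. z $ j = 0" "Pm i *\<^sub>v col X i = X *\<^sub>v z"
      using Pm_span[OF i] by blast
    have id: "i < d" using i kd by simp
    have "wv i = X *\<^sub>v unit_vec d i - X *\<^sub>v z" unfolding wv_def z(3) ucol[OF id] ..
    also have "\<dots> = X *\<^sub>v (unit_vec d i - z)"
      by (rule mult_minus_distrib_mat_vec[symmetric]) (use X z in auto)
    finally have wX: "wv i = X *\<^sub>v (unit_vec d i - z)" .
    show "wv i \<bullet> wv i \<noteq> 0"
    proof
      assume "wv i \<bullet> wv i = 0"
      then have "wv i = 0\<^sub>v n" using self_dot_zero wvc[OF id] by blast
      then have "unit_vec d i - z = 0\<^sub>v d" using inj[of "unit_vec d i - z"] wX z by simp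
      then have "(unit_vec d i - z) $ i = 0" using id by simp
      then show False using z id by simp
    qed
    show "wv i \<bullet> r = 0" using comm_scalar_prod[OF wvc[OF id] rc] orthX[of "unit_vec d i - z"] wX z by simp
    have PXi: "Pm i *\<^sub>v col X i \<in> col_space (drop_cols (i + 1) X)"
      unfolding Pm_def using proj_mat_spec(2)[OF drop_cols_carrier[OF X]] Xc id by simp
    have "col X i = wv i + Pm i *\<^sub>v col X i" using Xc[OF id] Pmc[of i] X unfolding wv_def by (intro eq_vecI) auto
    then have "wv i \<bullet> col X i = wv i \<bullet> wv i + wv i \<bullet> (Pm i *\<^sub>v col X i)"
      using scalar_prod_add_distrib[OF wvc[OF id] wvc[OF id], of "Pm i *\<^sub>v col X i"] Pmc[of i] Xc[OF id] by simp
    then show "wv i \<bullet> col X i = wv i \<bullet> wv i" using wv_orth[OF id PXi] by simp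
  qed
  have wv_Xj: "wv i \<bullet> col X j = 0" if "i < j" "j < d" for i j
    using wv_orth[of i "col X j"] col_in_drop[OF X, of "i+1" j] that by simp
  have Vr: "col V i \<bullet> r = 0" if i: "i < k" for i
    using Vcol[OF i] wv_r[OF i] wvc[of i] i kd rc by simp
  have VXj: "col V i \<bullet> col X j = 0" if "i < j" "j < d" "i < k" for i j
    using Vcol[of i] wv_Xj[of i j] wvc[of i] Xc[of j] that by simp
  have VXi: "col V i \<bullet> col X i \<noteq> 0" if i: "i < k" for i
  proof -
    have "vnorm (wv i) \<noteq> 0" using wv_ne[OF i] by (simp add: vnorm_def)
    then show ?thesis using Vcol[OF i] wv_Xi[OF i] wv_ne[OF i] wvc[of i] Xc[of i] i kd by simp
  qed
  have fcd[simp]: "dim_row (first_cols k A) = dim_row A" "dim_col (first_cols k A) = k" for A :: "real mat"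
    by (simp_all add: first_cols_def)
  define M where "M = (first_cols k V)\<^sup>T * first_cols k X"
  have Mc: "M \<in> carrier_mat k k" unfolding M_def carrier_mat_def by simp
  have Mij: "M $$ (i,j) = col V i \<bullet> col X j" if "i < k" "j < k" for i j
    unfolding M_def using that by (simp add: first_cols_col)
  have detM: "det M \<noteq> 0"
  proof -
    have "det M = prod_list (diag_mat M)"
      by (rule det_lower_triangular[OF _ Mc]) (use Mij VXj kd in auto)
    also have "\<dots> = (\<Prod>i = 0..<k. M $$ (i,i))" using Mc by (simp add: prod_list_diag_prod)
    also have "\<dots> \<noteq> 0" using Mij VXi by simp
    finally show ?thesis .
  qed
  obtain Mi where Mi: "minv M = Mi" "Mi \<in> carrier_mat k k" "Mi * M = 1\<^sub>m k"
    using minv_det[OF Mc detM] by blast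
  define P where "P = proj_mat (drop_cols k X)"
  have Pc: "P \<in> carrier_mat n n" unfolding P_def by (rule proj_mat_spec(1)[OF drop_cols_carrier[OF X]])
  have Py: "P *\<^sub>v y \<in> col_space (drop_cols k X)" unfolding P_def by (rule proj_mat_spec(2)[OF drop_cols_carrier[OF X] y])
  define \<sigma> where "\<sigma> = vnorm ((1\<^sub>m n - P) *\<^sub>v y)"
  have \<sigma>0: "\<sigma> \<noteq> 0" using sigma_pos unfolding \<sigma>_def P_def by simp
  define u where "u = (1 / \<sigma>) \<cdot>\<^sub>v (V\<^sup>T *\<^sub>v (y - P *\<^sub>v y))"
  define b where "b = first_entries k \<beta>"
  have bc: "b \<in> carrier_vec k" by (simp add: b_def first_entries_def)
  have ue: "first_entries k u = (1 / \<sigma>) \<cdot>\<^sub>v (M *\<^sub>v b)"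
  proof (rule eq_vecI)
    show "dim_vec (first_entries k u) = dim_vec ((1 / \<sigma>) \<cdot>\<^sub>v (M *\<^sub>v b))"
      using Mc by (simp add: first_entries_def)
    fix i assume "i < dim_vec ((1 / \<sigma>) \<cdot>\<^sub>v (M *\<^sub>v b))"
    then have i: "i < k" using Mc by simp
    have ind: "i < n - d + k" using i \<open>n \<ge> d\<close> by simp
    have VPy: "col V i \<bullet> (P *\<^sub>v y) = 0"
    proof -
      have "col V i = V *\<^sub>v unit_vec (n - d + k) i" using V ind by (simp add: mat_unit)
      then have "col V i \<in> col_space V" unfolding col_space_def using V by auto
      then show ?thesis using V_span Py by auto
    qed
    have Vic: "col V i \<in> carrier_vec n" using V by auto
    have e1: "first_entries k u $ i = (1 / \<sigma>) * (col V i \<bullet> (y - P *\<^sub>v y))"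
      unfolding u_def first_entries_def using i ind V y Pc by simp
    have e2: "col V i \<bullet> (y - P *\<^sub>v y) = col V i \<bullet> y"
      using scalar_prod_minus_distrib[OF Vic y, of "P *\<^sub>v y"] VPy Pc y by simp
    have e3: "col V i \<bullet> y = col V i \<bullet> (X *\<^sub>v \<beta>)"
      using scalar_prod_add_distrib[OF Vic _ rc, of "X *\<^sub>v \<beta>"] yr Vr[OF i] X \<beta>c by simp
    have "col V i \<bullet> (X *\<^sub>v \<beta>) = (X *\<^sub>v \<beta>) \<bullet> col V i"
      using comm_scalar_prod[OF Vic, of "X *\<^sub>v \<beta>"] X \<beta>c by simp
    also have "\<dots> = (\<Sum>j<d. \<beta> $ j * (cols X ! j \<bullet> col V i))"
    proof -
      have setc: "set (cols X) \<subseteq> carrier_vec n" using X by (auto simp: cols_def)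
      show ?thesis unfolding mv_lc[OF X \<beta>c] lc_dot[OF setc Vic] using X by simp
    qed
    also have "\<dots> = (\<Sum>j<d. \<beta> $ j * (col V i \<bullet> col X j))"
      using X Vic by (intro sum.cong refl) (simp add: comm_scalar_prod[of _ n])
    also have "\<dots> = (\<Sum>j<k. \<beta> $ j * (col V i \<bullet> col X j))"
      by (rule sum.mono_neutral_right) (use kd VXj i in auto)
    also have "\<dots> = (M *\<^sub>v b) $ i"
      using Mc i by (simp add: scalar_prod_def Mij b_def first_entries_def lessThan_atLeast0 mult.commute)
    finally show "first_entries k u $ i = ((1 / \<sigma>) \<cdot>\<^sub>v (M *\<^sub>v b)) $ i"
      using e1 e2 e3 i Mc by simp
  qed
  have main: "b = \<sigma> \<cdot>\<^sub>v (minv M *\<^sub>v first_entries k u)"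
  proof -
    have "\<sigma> \<cdot>\<^sub>v (minv M *\<^sub>v first_entries k u) = \<sigma> \<cdot>\<^sub>v ((1 / \<sigma>) \<cdot>\<^sub>v (Mi *\<^sub>v (M *\<^sub>v b)))"
      unfolding ue Mi(1) using mult_mat_vec[OF Mi(2), of "M *\<^sub>v b"] Mc bc by simp
    also have "\<dots> = (\<sigma> * (1 / \<sigma>)) \<cdot>\<^sub>v (Mi *\<^sub>v (M *\<^sub>v b))"
      by (simp only: smult_smult_assoc)
    also have "Mi *\<^sub>v (M *\<^sub>v b) = (Mi * M) *\<^sub>v b"
      by (rule assoc_mult_mat_vec[symmetric]) (use Mi Mc bc in auto)
    also have "(\<sigma> * (1 / \<sigma>)) \<cdot>\<^sub>v ((Mi * M) *\<^sub>v b) = b" unfolding Mi(3) using \<sigma>0 bc by simp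
    finally show ?thesis by simp
  qed
  show ?thesis
    unfolding Let_def P_def[symmetric] G_def[symmetric] \<sigma>_def[symmetric] \<beta>_def[symmetric]
      u_def[symmetric] M_def[symmetric] b_def[symmetric]
    by (rule main)
qed

end
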